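(* Let $M=(\mathbf{K}^{\mathbf{n}},\rho)$ be a sum-matroid with nullity function $\eta(\mathcal{L})=\mathrm{Rk}(\mathcal{L})-\rho(\mathcal{L})$. Then for every $i\in\{1,\dots,\eta(\mathbf{K}^{\mathbf{n}})\}$, $$\min\{\mathrm{Rk}(\mathcal{L}):\mathcal{L}\in\mathcal{P}(\mathbf{K}^{\mathbf{n}}),\ \eta(\mathcal{L})=i\}=\min\{\mathrm{Rk}(\mathcal{L}):\mathcal{L}\in\mathcal{P}(\mathbf{K}^{\mathbf{n}}),\ \eta(\mathcal{L})\ge i\}.$$
   Context: $\ell,n_1,\dots,n_\ell$ positive integers, $K_1,\dots,K_\ell$ finite fields. $\mathcal{P}(\mathbf{K}^{\mathbf{n}})=\mathcal{P}(K_1^{n_1})\times\cdots\times\mathcal{P}(K_\ell^{n_\ell})$, $\mathcal{P}(K_i^{n_i})$ the lattice of $K_i$-subspaces of $K_i^{n_i}$, with componentwise inclusion, sum $+$ and intersection $\cap$; $\mathrm{Rk}(\mathcal{L})=\sum_i\dim_{K_i}\mathcal{L}_i$; $\mathbf{K}^{\mathbf{n}}=(K_1^{n_1},\dots,K_\ell^{n_\ell})$. A sum-matroid is a pair $(\mathbf{K}^{\mathbf{n}},\rho)$ with $\rho:\mathcal{P}(\mathbf{K}^{\mathbf{n}})\to\mathbb{Z}_{\ge0}$ satisfying for all $\mathcal{L},\mathcal{L}'$: (R1) $0\le\rho(\mathcal{L})\le\mathrm{Rk}(\mathcal{L})$; (R2) $\mathcal{L}\subseteq\mathcal{L}'\Rightarrow\rho(\mathcal{L})\le\rho(\mathcal{L}')$;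 (R3) $\rho(\mathcal{L}+\mathcal{L}')+\rho(\mathcal{L}\cap\mathcal{L}')\le\rho(\mathcal{L})+\rho(\mathcal{L}')$. *)

theory Defs
  imports "HOL-Algebra.Ring"
begin

text \<open>Vectors of K^n are represented as functions nat => 'a that are zero outside {..<n}.
  A family of finite fields K_0,...,K_(l-1) is given as HOL-Algebra rings over a common
  carrier type; index i ranges over {..<l} (0-based).\<close>

definition Vs :: "('a, 'b) ring_scheme \<Rightarrow> nat \<Rightarrow> (nat \<Rightarrow> 'a) set" where
  "Vs K n = {v. (\<forall>j<n. v j \<in> carrier K) \<and> (\<forall>j\<ge>n. v j = \<zero>\<^bsub>K\<^esub>)}"

definition vadd :: "('a, 'b) ring_scheme \<Rightarrow> (nat \<Rightarrow> 'a) \<Rightarrow> (nat \<Rightarrow> 'a) \<Rightarrow> (nat \<Rightarrow> 'a)" where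
  "vadd K u v = (\<lambda>j. u j \<oplus>\<^bsub>K\<^esub> v j)"

definition vsmult :: "('a, 'b) ring_scheme \<Rightarrow> 'a \<Rightarrow> (nat \<Rightarrow> 'a) \<Rightarrow> (nat \<Rightarrow> 'a)" where
  "vsmult K c v = (\<lambda>j. c \<otimes>\<^bsub>K\<^esub> v j)"

definition vzero :: "('a, 'b) ring_scheme \<Rightarrow> (nat \<Rightarrow> 'a)" where
  "vzero K = (\<lambda>j. \<zero>\<^bsub>K\<^esub>)"

definition subspace_of :: "('a, 'b) ring_scheme \<Rightarrow> nat \<Rightarrow> (nat \<Rightarrow> 'a) set \<Rightarrow> bool" where
  "subspace_of K n U \<longleftrightarrow> U \<subseteq> Vs K n \<and> vzero K \<in> U
     \<and> (\<forall>u\<in>U. \<forall>v\<in>U. vadd K u v \<in> U)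
     \<and> (\<forall>c\<in>carrier K. \<forall>v\<in>U. vsmult K c v \<in> U)"

definition lincomb :: "('a, 'b) ring_scheme \<Rightarrow> 'a list \<Rightarrow> (nat \<Rightarrow> 'a) list \<Rightarrow> (nat \<Rightarrow> 'a)" where
  "lincomb K cs vs = (\<lambda>j. finsum K (\<lambda>k. (cs ! k) \<otimes>\<^bsub>K\<^esub> ((vs ! k) j)) {..<length vs})"

definition lin_indep :: "('a, 'b) ring_scheme \<Rightarrow> (nat \<Rightarrow> 'a) list \<Rightarrow> bool" where
  "lin_indep K vs \<longleftrightarrow> (\<forall>cs. length cs = length vs \<and> set cs \<subseteq> carrier K
       \<and> lincomb K cs vs = vzero K \<longrightarrow> (\<forall>c\<in>set cs. c = \<zero>\<^bsub>K\<^esub>))"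

definition vdim :: "('a, 'b) ring_scheme \<Rightarrow> (nat \<Rightarrow> 'a) set \<Rightarrow> nat" where
  "vdim K U = Max {length vs | vs. set vs \<subseteq> U \<and> lin_indep K vs}"

text \<open>The lattice P(K^n): tuples (L_0,...,L_(l-1)) of subspaces, padded with {} beyond l.\<close>
definition Psp :: "nat \<Rightarrow> (nat \<Rightarrow> ('a, 'b) ring_scheme) \<Rightarrow> (nat \<Rightarrow> nat) \<Rightarrow> (nat \<Rightarrow> (nat \<Rightarrow> 'a) set) set" where
  "Psp l K n = {L. (\<forall>i<l. subspace_of (K i) (n i) (L i)) \<and> (\<forall>i\<ge>l. L i = {})}"

definition Ltop :: "nat \<Rightarrow> (nat \<Rightarrow> ('a, 'b) ring_scheme) \<Rightarrow> (nat \<Rightarrow> nat) \<Rightarrow> (nat \<Rightarrow> (nat \<Rightarrow> 'a) set)" where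
  "Ltop l K n = (\<lambda>i. if i < l then Vs (K i) (n i) else {})"

definition Lsum :: "(nat \<Rightarrow> ('a, 'b) ring_scheme) \<Rightarrow> (nat \<Rightarrow> (nat \<Rightarrow> 'a) set) \<Rightarrow> (nat \<Rightarrow> (nat \<Rightarrow> 'a) set) \<Rightarrow> (nat \<Rightarrow> (nat \<Rightarrow> 'a) set)" where
  "Lsum K L L' = (\<lambda>i. {vadd (K i) u v | u v. u \<in> L i \<and> v \<in> L' i})"

definition Linter :: "(nat \<Rightarrow> (nat \<Rightarrow> 'a) set) \<Rightarrow> (nat \<Rightarrow> (nat \<Rightarrow> 'a) set) \<Rightarrow> (nat \<Rightarrow> (nat \<Rightarrow> 'a) set)" where
  "Linter L L' = (\<lambda>i. L i \<inter> L' i)"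

definition Lsubseteq :: "nat \<Rightarrow> (nat \<Rightarrow> (nat \<Rightarrow> 'a) set) \<Rightarrow> (nat \<Rightarrow> (nat \<Rightarrow> 'a) set) \<Rightarrow> bool" where
  "Lsubseteq l L L' \<longleftrightarrow> (\<forall>i<l. L i \<subseteq> L' i)"

definition Rk :: "nat \<Rightarrow> (nat \<Rightarrow> ('a, 'b) ring_scheme) \<Rightarrow> (nat \<Rightarrow> (nat \<Rightarrow> 'a) set) \<Rightarrow> nat" where
  "Rk l K L = (\<Sum>i<l. vdim (K i) (L i))"

definition sum_matroid :: "nat \<Rightarrow> (nat \<Rightarrow> ('a, 'b) ring_scheme) \<Rightarrow> (nat \<Rightarrow> nat)
    \<Rightarrow> ((nat \<Rightarrow> (nat \<Rightarrow> 'a) set) \<Rightarrow> nat) \<Rightarrow> bool" where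
  "sum_matroid l K n rho \<longleftrightarrow>
     0 < l \<and> (\<forall>i<l. 0 < n i \<and> field (K i) \<and> finite (carrier (K i)))
     \<and> (\<forall>L\<in>Psp l K n. rho L \<le> Rk l K L)
     \<and> (\<forall>L\<in>Psp l K n. \<forall>L'\<in>Psp l K n. Lsubseteq l L L' \<longrightarrow> rho L \<le> rho L')
     \<and> (\<forall>L\<in>Psp l K n. \<forall>L'\<in>Psp l K n.
          rho (Lsum K L L') + rho (Linter L L') \<le> rho L + rho L')"

definition nullity :: "nat \<Rightarrow> (nat \<Rightarrow> ('a, 'b) ring_scheme) \<Rightarrow> ((nat \<Rightarrow> (nat \<Rightarrow> 'a) set) \<Rightarrow> nat)
    \<Rightarrow> (nat \<Rightarrow> (nat \<Rightarrow> 'a) set) \<Rightarrow> nat" where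
  "nullity l K rho L = Rk l K L - rho L"

end

theory Submission
  imports Defs
begin

definition span :: "('a, 'b) ring_scheme \<Rightarrow> (nat \<Rightarrow> 'a) list \<Rightarrow> (nat \<Rightarrow> 'a) set" where
  "span K vs = {lincomb K cs vs | cs. length cs = length vs \<and> set cs \<subseteq> carrier K}"

context field begin

lemma Vs_carrier: "v \<in> Vs R n \<Longrightarrow> v j \<in> carrier R"
  unfolding Vs_def by (cases "j < n") auto

lemma vzero_Vs[simp]: "vzero R \<in> Vs R n"
  unfolding Vs_def vzero_def by auto

lemma vadd_Vs[simp]: "u \<in> Vs R n \<Longrightarrow> v \<in> Vs R n \<Longrightarrow> vadd R u v \<in> Vs R n"
  unfolding Vs_def vadd_def by auto

lemma vsmult_Vs[simp]: "c \<in> carrier R \<Longrightarrow> v \<in> Vs R n \<Longrightarrow> vsmult R c v \<in> Vs R n"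
  unfolding Vs_def vsmult_def by auto

lemma lincomb_Nil[simp]: "lincomb R [] [] = vzero R"
  unfolding lincomb_def vzero_def by auto

lemma lincomb_Cons:
  assumes "c \<in> carrier R" "set cs \<subseteq> carrier R" "v \<in> Vs R n" "set vs \<subseteq> Vs R n"
    "length cs = length vs"
  shows "lincomb R (c#cs) (v#vs) = vadd R (vsmult R c v) (lincomb R cs vs)"
proof (rule ext)
  fix j
  let ?g = "\<lambda>k. (cs ! k) \<otimes> ((vs ! k) j)"
  have gc: "?g \<in> {..<length vs} \<rightarrow> carrier R"
  proof
    fix k assume "k \<in> {..<length vs}"
    then have "cs ! k \<in> carrier R" "vs ! k \<in> Vs R n" using assms nth_mem by auto
    then show "?g k \<in> carrier R" using Vs_carrier by auto
  qed
  let ?f = "\<lambda>k. ((c#cs) ! k) \<otimes> (((v#vs) ! k) j)"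
  have fc: "?f \<in> Suc ` {..<length vs} \<rightarrow> carrier R" using gc by auto
  have f0: "?f 0 \<in> carrier R" using assms Vs_carrier by auto
  have "finsum R ?f {..<length (v#vs)} = ?f 0 \<oplus> finsum R ?f (Suc ` {..<length vs})"
    unfolding length_Cons lessThan_Suc_eq_insert_0
    by (rule finsum_insert) (use fc f0 in auto)
  also have "finsum R ?f (Suc ` {..<length vs}) = finsum R ?g {..<length vs}"
    by (subst finsum_reindex) (use fc in auto)
  finally show "lincomb R (c#cs) (v#vs) j = vadd R (vsmult R c v) (lincomb R cs vs) j"
    unfolding lincomb_def vadd_def vsmult_def by simp
qed


lemma lincomb_Vs:
  "set cs \<subseteq> carrier R \<Longrightarrow> set vs \<subseteq> Vs R n \<Longrightarrow> length cs = length vs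
   \<Longrightarrow> lincomb R cs vs \<in> Vs R n"
proof (induction vs arbitrary: cs)
  case Nil then show ?case by simp
next
  case (Cons v vs)
  then obtain c cs' where "cs = c # cs'" by (cases cs) auto
  with Cons show ?case by (simp add: lincomb_Cons[where n=n])
qed

lemma lincomb_smult:
  "d \<in> carrier R \<Longrightarrow> set cs \<subseteq> carrier R \<Longrightarrow> set vs \<subseteq> Vs R n \<Longrightarrow> length cs = length vs
   \<Longrightarrow> lincomb R (map (\<lambda>x. d \<otimes> x) cs) vs = vsmult R d (lincomb R cs vs)"
proof (induction vs arbitrary: cs)
  case Nil then show ?case by (simp add: vsmult_def vzero_def)
next
  case (Cons v vs)
  then obtain c cs' where cs: "cs = c # cs'" by (cases cs) auto
  have L: "lincomb R cs' vs \<in> Vs R n" using Cons cs by (intro lincomb_Vs) auto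
  have st: "set (map (\<lambda>x. d \<otimes> x) cs') \<subseteq> carrier R" using Cons cs by auto
  have "lincomb R (map (\<lambda>x. d \<otimes> x) cs) (v#vs)
     = vadd R (vsmult R (d \<otimes> c) v) (vsmult R d (lincomb R cs' vs))"
    using Cons cs st by (simp add: lincomb_Cons[where n=n])
  also have "\<dots> = vsmult R d (lincomb R cs (v#vs))"
    using Cons cs L by (simp add: lincomb_Cons[where n=n]) (auto simp: vadd_def vsmult_def Vs_carrier r_distr m_assoc)
  finally show ?case .
qed

lemma lincomb_add:
  "set cs \<subseteq> carrier R \<Longrightarrow> set ds \<subseteq> carrier R \<Longrightarrow> set vs \<subseteq> Vs R n
   \<Longrightarrow> length cs = length vs \<Longrightarrow> length ds = length vs
   \<Longrightarrow> lincomb R (map2 (\<oplus>) cs ds) vs = vadd R (lincomb R cs vs) (lincomb R ds vs)"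
proof (induction vs arbitrary: cs ds)
  case Nil then show ?case by (simp add: vadd_def vzero_def)
next
  case (Cons v vs)
  then obtain c cs' where cs: "cs = c # cs'" by (cases cs) auto
  from Cons obtain d ds' where ds: "ds = d # ds'" by (cases ds) auto
  have L1: "lincomb R cs' vs \<in> Vs R n" using Cons cs by (intro lincomb_Vs) auto
  have L2: "lincomb R ds' vs \<in> Vs R n" using Cons ds by (intro lincomb_Vs) auto
  have "\<forall>i<length vs. cs'!i \<in> carrier R \<and> ds'!i \<in> carrier R"
  proof (intro allI impI)
    fix i assume "i < length vs"
    then have "cs' ! i \<in> set cs'" "ds' ! i \<in> set ds'" using Cons.prems cs ds by auto
    then show "cs'!i \<in> carrier R \<and> ds'!i \<in> carrier R" using Cons.prems cs ds by auto
  qed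
  then have st: "set (map2 (\<oplus>) cs' ds') \<subseteq> carrier R" using Cons cs ds
    by (auto simp: set_zip)
  have "lincomb R (map2 (\<oplus>) cs ds) (v#vs)
     = vadd R (vsmult R (c \<oplus> d) v) (vadd R (lincomb R cs' vs) (lincomb R ds' vs))"
    using Cons cs ds st by (simp add: lincomb_Cons[where n=n])
  also have "\<dots> = vadd R (lincomb R cs (v#vs)) (lincomb R ds (v#vs))"
    using Cons cs ds L1 L2 by (simp add: lincomb_Cons[where n=n])
      (rule ext, auto simp: vadd_def vsmult_def Vs_carrier l_distr a_ac)
  finally show ?case .
qed


lemma vsmult_zero[simp]: "v \<in> Vs R n \<Longrightarrow> vsmult R \<zero> v = vzero R"
  by (rule ext) (simp add: vsmult_def vzero_def Vs_carrier)

lemma vadd_zero_left[simp]: "v \<in> Vs R n \<Longrightarrow> vadd R (vzero R) v = v"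
  by (rule ext) (simp add: vadd_def vzero_def Vs_carrier)

lemma vadd_zero_right[simp]: "v \<in> Vs R n \<Longrightarrow> vadd R v (vzero R) = v"
  by (rule ext) (simp add: vadd_def vzero_def Vs_carrier)

lemma vadd_neg: "v \<in> Vs R n \<Longrightarrow> vadd R (vsmult R (\<ominus> \<one>) v) v = vzero R"
  by (rule ext) (simp add: vadd_def vsmult_def vzero_def Vs_carrier l_minus l_neg)

lemma span_Cons:
  assumes "v \<in> Vs R n" "set vs \<subseteq> Vs R n"
  shows "span R (v#vs) = {vadd R (vsmult R a v) s | a s. a \<in> carrier R \<and> s \<in> span R vs}"
proof
  show "span R (v#vs) \<subseteq> {vadd R (vsmult R a v) s | a s. a \<in> carrier R \<and> s \<in> span R vs}"
  proof
    fix x assume "x \<in> span R (v#vs)"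
    then obtain cs where cs: "x = lincomb R cs (v#vs)" "length cs = Suc (length vs)" "set cs \<subseteq> carrier R"
      unfolding span_def by auto
    then obtain c cs' where "cs = c#cs'" by (cases cs) auto
    with cs assms show "x \<in> {vadd R (vsmult R a v) s | a s. a \<in> carrier R \<and> s \<in> span R vs}"
      unfolding span_def by (auto simp: lincomb_Cons[where n=n])
  qed
next
  show "{vadd R (vsmult R a v) s | a s. a \<in> carrier R \<and> s \<in> span R vs} \<subseteq> span R (v#vs)"
  proof
    fix x assume "x \<in> {vadd R (vsmult R a v) s | a s. a \<in> carrier R \<and> s \<in> span R vs}"
    then obtain a cs where "a \<in> carrier R" "x = vadd R (vsmult R a v) (lincomb R cs vs)"
       "length cs = length vs" "set cs \<subseteq> carrier R"
      unfolding span_def by auto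
    with assms show "x \<in> span R (v#vs)" unfolding span_def
      by (intro CollectI exI[of _ "a#cs"]) (auto simp: lincomb_Cons[where n=n])
  qed
qed

lemma span_Vs: "set vs \<subseteq> Vs R n \<Longrightarrow> span R vs \<subseteq> Vs R n"
  unfolding span_def using lincomb_Vs by blast

lemma span_Nil[simp]: "span R [] = {vzero R}"
  unfolding span_def by auto

lemma span_add:
  assumes "set vs \<subseteq> Vs R n" "x \<in> span R vs" "y \<in> span R vs"
  shows "vadd R x y \<in> span R vs"
proof -
  obtain cs ds where "x = lincomb R cs vs" "length cs = length vs" "set cs \<subseteq> carrier R"
     "y = lincomb R ds vs" "length ds = length vs" "set ds \<subseteq> carrier R"
    using assms unfolding span_def by auto
  moreover have "set (map2 (\<oplus>) cs ds) \<subseteq> carrier R" if "set cs \<subseteq> carrier R" "set ds \<subseteq> carrier R"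
    using that by (auto simp: set_zip nth_mem subsetD)
  ultimately show ?thesis unfolding span_def using assms(1)
    by (intro CollectI exI[of _ "map2 (\<oplus>) cs ds"]) (auto simp: lincomb_add[where n=n])
qed

lemma span_smult:
  assumes "set vs \<subseteq> Vs R n" "x \<in> span R vs" "d \<in> carrier R"
  shows "vsmult R d x \<in> span R vs"
proof -
  obtain cs where "x = lincomb R cs vs" "length cs = length vs" "set cs \<subseteq> carrier R"
    using assms unfolding span_def by auto
  then show ?thesis unfolding span_def using assms
    by (intro CollectI exI[of _ "map (\<lambda>x. d \<otimes> x) cs"]) (auto simp: lincomb_smult[where n=n])
qed

lemma span_sub:
  assumes "subspace_of R n U" "set vs \<subseteq> U"
  shows "span R vs \<subseteq> U"
  using assms(2)
proof (induction vs)
  case Nil then show ?case using assms(1) unfolding subspace_of_def by auto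
next
  case (Cons v vs)
  have UV: "U \<subseteq> Vs R n" using assms(1) unfolding subspace_of_def by auto
  show ?case
  proof
    fix x assume "x \<in> span R (v#vs)"
    then obtain a s where "a \<in> carrier R" "s \<in> span R vs" "x = vadd R (vsmult R a v) s"
      using span_Cons[where v=v and vs=vs and n=n] Cons.prems UV by auto
    then show "x \<in> U" using Cons assms(1) unfolding subspace_of_def by auto
  qed
qed

lemma pointwise_solve:
  assumes "x \<in> carrier R" "c \<in> carrier R" "c \<noteq> \<zero>" "y \<in> carrier R" "c \<otimes> x \<oplus> y = \<zero>"
  shows "x = (\<ominus> (inv c)) \<otimes> y"
proof -
  have ic: "inv c \<in> carrier R" "inv c \<otimes> c = \<one>" using assms field_Units by auto
  have "c \<otimes> x = \<ominus> y" using assms by (metis minus_equality m_closed)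
  then have "inv c \<otimes> (c \<otimes> x) = inv c \<otimes> (\<ominus> y)" by simp
  then show ?thesis using ic assms by (simp add: m_assoc[symmetric] r_minus l_minus)
qed

lemma lin_indep_Cons:
  assumes "v \<in> Vs R n" "set vs \<subseteq> Vs R n"
  shows "lin_indep R (v#vs) \<longleftrightarrow> lin_indep R vs \<and> v \<notin> span R vs"
proof
  assume I: "lin_indep R (v#vs)"
  show "lin_indep R vs \<and> v \<notin> span R vs"
  proof
    show "lin_indep R vs" unfolding lin_indep_def
    proof (intro allI impI)
      fix cs assume cs: "length cs = length vs \<and> set cs \<subseteq> carrier R \<and> lincomb R cs vs = vzero R"
      then have "lincomb R (\<zero>#cs) (v#vs) = vzero R" using assms by (simp add: lincomb_Cons[where n=n])
      then show "\<forall>c\<in>set cs. c = \<zero>" using I cs unfolding lin_indep_def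
        by (metis insert_subset length_Cons list.set(2) list.set_intros(2) zero_closed)
    qed
    show "v \<notin> span R vs"
    proof
      assume "v \<in> span R vs"
      then obtain cs where cs: "v = lincomb R cs vs" "length cs = length vs" "set cs \<subseteq> carrier R"
        unfolding span_def by auto
      then have "lincomb R ((\<ominus> \<one>)#cs) (v#vs) = vzero R" using assms
        by (simp add: lincomb_Cons[where n=n] vadd_neg)
      then have "length ((\<ominus> \<one>)#cs) = length (v#vs) \<and> set ((\<ominus> \<one>)#cs) \<subseteq> carrier R
          \<and> lincomb R ((\<ominus> \<one>)#cs) (v#vs) = vzero R" using cs(2,3) by simp
      then have "\<forall>c\<in>set ((\<ominus> \<one>)#cs). c = \<zero>" using I unfolding lin_indep_def by blast
      then have "\<ominus> \<one> = \<zero>" by simp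
      then show False by (metis minus_minus minus_zero one_closed one_not_zero zero_closed)
    qed
  qed
next
  assume A: "lin_indep R vs \<and> v \<notin> span R vs"
  show "lin_indep R (v#vs)" unfolding lin_indep_def
  proof (intro allI impI)
    fix cs' assume cs': "length cs' = length (v#vs) \<and> set cs' \<subseteq> carrier R \<and> lincomb R cs' (v#vs) = vzero R"
    then obtain c cs where cc: "cs' = c#cs" by (cases cs') auto
    let ?l = "lincomb R cs vs"
    have c: "c \<in> carrier R" "set cs \<subseteq> carrier R" "length cs = length vs" using cs' cc by auto
    have lV: "?l \<in> Vs R n" using c assms lincomb_Vs by auto
    have eq: "vadd R (vsmult R c v) ?l = vzero R"
      using cs' cc c assms by (simp add: lincomb_Cons[where n=n])
    have c0: "c = \<zero>"
    proof (rule ccontr)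
      assume cnz: "c \<noteq> \<zero>"
      have ic: "inv c \<in> carrier R" using c cnz field_Units by auto
      have "v = vsmult R (\<ominus> (inv c)) ?l"
      proof (rule ext)
        fix j
        have "c \<otimes> v j \<oplus> ?l j = \<zero>" using fun_cong[OF eq, of j] by (simp add: vadd_def vsmult_def vzero_def)
        then show "v j = vsmult R (\<ominus> (inv c)) ?l j" unfolding vsmult_def
          using pointwise_solve[of "v j" c "?l j"] c cnz Vs_carrier assms lV by auto
      qed
      moreover have "?l \<in> span R vs" unfolding span_def using c by auto
      ultimately have "v \<in> span R vs" using span_smult[of vs n ?l] assms ic by auto
      then show False using A by auto
    qed
    then have "?l = vzero R" using eq assms lV by simp
    then have "\<forall>x\<in>set cs. x = \<zero>" using A c unfolding lin_indep_def by auto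
    then show "\<forall>x\<in>set cs'. x = \<zero>" using cc c0 by auto
  qed
qed


lemma pw1:
  assumes "x \<in> carrier R" "a \<in> carrier R" "a' \<in> carrier R" "s \<in> carrier R" "s' \<in> carrier R"
   "a \<otimes> x \<oplus> s = a' \<otimes> x \<oplus> s'"
  shows "(a \<ominus> a') \<otimes> x \<oplus> (s \<oplus> (\<ominus> \<one>) \<otimes> s') = \<zero>"
proof -
  have "(a \<ominus> a') \<otimes> x \<oplus> (s \<oplus> (\<ominus> \<one>) \<otimes> s') = (a \<otimes> x \<oplus> s) \<oplus> \<ominus> (a' \<otimes> x \<oplus> s')"
    using assms(1-5) by (simp add: a_minus_def l_distr l_minus minus_add a_ac)
  also have "\<dots> = \<zero>" using assms by (simp add: r_neg)
  finally show ?thesis .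
qed

lemma pw2:
  assumes "x \<in> carrier R" "c \<in> carrier R" "y \<in> carrier R"
  shows "x \<oplus> (\<ominus> c) \<otimes> y \<oplus> c \<otimes> y = x"
  by (simp add: a_assoc assms(1,2,3) l_minus l_neg)

lemma finite_Vs: "finite (carrier R) \<Longrightarrow> finite (Vs R n)"
proof -
  assume f: "finite (carrier R)"
  have "Vs R n = {v. \<forall>x. (x \<in> {..<n} \<longrightarrow> v x \<in> carrier R) \<and> (x \<notin> {..<n} \<longrightarrow> v x = \<zero>)}"
    unfolding Vs_def by auto
  then show ?thesis using finite_set_of_finite_funs[OF _ f, of "{..<n}"] by simp
qed

lemma card_span:
  assumes "finite (carrier R)" "lin_indep R vs" "set vs \<subseteq> Vs R n"
  shows "card (span R vs) = card (carrier R) ^ length vs"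
  using assms(2,3)
proof (induction vs)
  case Nil then show ?case by simp
next
  case (Cons v vs)
  have v: "v \<in> Vs R n" and vs: "set vs \<subseteq> Vs R n" using Cons.prems by auto
  have I: "lin_indep R vs" and nv: "v \<notin> span R vs" using Cons.prems lin_indep_Cons[OF v vs] by auto
  let ?f = "\<lambda>(a, s). vadd R (vsmult R a v) s"
  have im: "span R (v#vs) = ?f ` (carrier R \<times> span R vs)"
    using span_Cons[OF v vs] by auto
  have inj: "inj_on ?f (carrier R \<times> span R vs)"
  proof (rule inj_onI, clarify)
    fix a s a' s'
    assume as: "a \<in> carrier R" "s \<in> span R vs" "a' \<in> carrier R" "s' \<in> span R vs"
      and eq: "vadd R (vsmult R a v) s = vadd R (vsmult R a' v) s'"
    have sV: "s \<in> Vs R n" "s' \<in> Vs R n" using as span_Vs[OF vs] by auto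
    have pe: "a \<otimes> v j \<oplus> s j = a' \<otimes> v j \<oplus> s' j" for j
      using fun_cong[OF eq, of j] by (simp add: vadd_def vsmult_def)
    have aa: "a = a'"
    proof (rule ccontr)
      assume ne: "a \<noteq> a'"
      let ?c = "a \<ominus> a'"
      let ?y = "vadd R s (vsmult R (\<ominus> \<one>) s')"
      have c1: "?c \<in> carrier R" using as by simp
      have c2: "?c \<noteq> \<zero>"
      proof
        assume "?c = \<zero>"
        then have "\<ominus> (\<ominus> a') = a" using as by (intro minus_equality) (auto simp: a_minus_def)
        then show False using ne as by simp
      qed
      note c = c1 c2
      have ic: "inv ?c \<in> carrier R" using c field_Units by auto
      have yV: "?y \<in> Vs R n" using sV by simp
      have "v = vsmult R (\<ominus> (inv ?c)) ?y"
      proof (rule ext)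
        fix j
        have h: "?c \<otimes> v j \<oplus> ?y j = \<zero>"
          using pw1[of "v j" a a' "s j" "s' j"] pe[of j] as Vs_carrier v sV
          by (simp add: vadd_def vsmult_def)
        have "v j = (\<ominus> (inv ?c)) \<otimes> ?y j"
          by (rule pointwise_solve[of "v j" ?c "?y j"]) (use h c Vs_carrier[OF v] Vs_carrier[OF yV] in auto)
        then show "v j = vsmult R (\<ominus> (inv ?c)) ?y j" by (simp only: vsmult_def)
      qed
      moreover have "?y \<in> span R vs" using span_add[OF vs] span_smult[OF vs] as by simp
      ultimately have "v \<in> span R vs" using span_smult[OF vs] ic by auto
      then show False using nv by simp
    qed
    moreover have "s = s'"
    proof (rule ext)
      fix j
      let ?t = "a' \<otimes> v j"
      have t: "?t \<in> carrier R" using as Vs_carrier[OF v] by simp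
      have "s j \<oplus> ?t = s' j \<oplus> ?t" using pe[of j] aa t Vs_carrier sV by (simp add: a_comm)
      then show "s j = s' j" using t Vs_carrier sV by simp
    qed
    ultimately show "a = a' \<and> s = s'" by simp
  qed
  have "card (span R (v#vs)) = card (carrier R \<times> span R vs)"
    unfolding im by (rule card_image[OF inj])
  also have "\<dots> = card (carrier R) * card (carrier R) ^ length vs"
    using Cons.IH[OF I vs] by (simp add: card_cartesian_product)
  finally show ?case by simp
qed

lemma lin_indep_Nil[simp]: "lin_indep R []"
  unfolding lin_indep_def by auto

lemma card_carrier_ge2: "finite (carrier R) \<Longrightarrow> 2 \<le> card (carrier R)"
proof -
  assume f: "finite (carrier R)"
  have "{\<zero>, \<one>} \<subseteq> carrier R" by auto
  then have "card {\<zero>, \<one>} \<le> card (carrier R)" using f card_mono by blast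
  then show ?thesis using one_not_zero by simp
qed

lemma dim_card:
  assumes f: "finite (carrier R)" and U: "subspace_of R n U"
  shows "card U = card (carrier R) ^ vdim R U"
proof -
  let ?q = "card (carrier R)"
  let ?S = "{length vs | vs. set vs \<subseteq> U \<and> lin_indep R vs}"
  have UV: "U \<subseteq> Vs R n" using U unfolding subspace_of_def by auto
  have bnd: "?S \<subseteq> {..card (Vs R n)}"
  proof
    fix k assume "k \<in> ?S"
    then obtain vs where vs: "k = length vs" "set vs \<subseteq> U" "lin_indep R vs" by auto
    have "?q ^ k = card (span R vs)" using card_span[OF f vs(3), where n=n] vs UV by auto
    also have "\<dots> \<le> card (Vs R n)" using span_Vs[of vs n] vs UV finite_Vs[OF f]
      by (intro card_mono) auto
    finally have "?q ^ k \<le> card (Vs R n)" .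
    moreover have "k < 2 ^ k" by (rule less_exp)
    moreover have "(2::nat) ^ k \<le> ?q ^ k" using card_carrier_ge2[OF f] by (simp add: power_mono)
    ultimately have "k \<le> card (Vs R n)" by linarith
    then show "k \<in> {..card (Vs R n)}" by simp
  qed
  have finS: "finite ?S" using bnd finite_subset by blast
  have "length [] \<in> ?S" by (intro CollectI exI[of _ "[]"]) simp
  then have neS: "?S \<noteq> {}" by blast
  have "Max ?S \<in> ?S" using Max_in[OF finS neS] .
  then obtain vs0 where v0: "vdim R U = length vs0" "set vs0 \<subseteq> U" "lin_indep R vs0"
    unfolding vdim_def by auto
  have "span R vs0 = U"
  proof
    show "span R vs0 \<subseteq> U" by (rule span_sub[OF U v0(2)])
    show "U \<subseteq> span R vs0"
    proof
      fix u assume u: "u \<in> U"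
      show "u \<in> span R vs0"
      proof (rule ccontr)
        assume "u \<notin> span R vs0"
        then have "lin_indep R (u#vs0)" using lin_indep_Cons[of u n vs0] u v0 UV by auto
        then have "length (u#vs0) \<in> ?S" using u v0 by (intro CollectI exI[of _ "u#vs0"]) auto
        then have "length (u#vs0) \<le> Max ?S" using Max_ge[OF finS] by blast
        then show False using v0 unfolding vdim_def by simp
      qed
    qed
  qed
  then show ?thesis using card_span[OF f v0(3), where n=n] v0 UV by auto
qed


lemma hyperplane:
  assumes f: "finite (carrier R)" and U: "subspace_of R n U" and w: "w \<in> U" and wj: "w j = \<one>"
  shows "subspace_of R n {u \<in> U. u j = \<zero>} \<and> vdim R U = Suc (vdim R {u \<in> U. u j = \<zero>})"
proof -
  let ?H = "{u \<in> U. u j = \<zero>}"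
  have UV: "U \<subseteq> Vs R n" using U unfolding subspace_of_def by auto
  have wV: "w \<in> Vs R n" using w UV by auto
  have HS: "subspace_of R n ?H"
    using U UV unfolding subspace_of_def
    by (auto simp: vzero_def vadd_def vsmult_def Vs_carrier)
  let ?f = "\<lambda>(a, h). vadd R h (vsmult R a w)"
  have im: "?f ` (carrier R \<times> ?H) = U"
  proof
    show "?f ` (carrier R \<times> ?H) \<subseteq> U" using U w unfolding subspace_of_def by auto
    show "U \<subseteq> ?f ` (carrier R \<times> ?H)"
    proof
      fix u assume u: "u \<in> U"
      have uV: "u \<in> Vs R n" using u UV by auto
      have uj: "u j \<in> carrier R" using Vs_carrier[OF uV] .
      let ?h = "vadd R u (vsmult R (\<ominus> (u j)) w)"
      have hU: "?h \<in> U" using U u w uj unfolding subspace_of_def by auto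
      have "?h j = \<zero>" using uj wj by (simp add: vadd_def vsmult_def r_neg)
      with hU have hH: "?h \<in> ?H" by simp
      have "?f (u j, ?h) = u"
      proof (rule ext)
        fix k show "?f (u j, ?h) k = u k"
          using pw2[of "u k" "u j" "w k"] uj Vs_carrier[OF uV] Vs_carrier[OF wV]
          by (simp add: vadd_def vsmult_def)
      qed
      then show "u \<in> ?f ` (carrier R \<times> ?H)" using hH uj by force
    qed
  qed
  have inj: "inj_on ?f (carrier R \<times> ?H)"
  proof (rule inj_onI, clarify)
    fix a h a' h'
    assume as: "a \<in> carrier R" "h \<in> U" "h j = \<zero>" "a' \<in> carrier R" "h' \<in> U" "h' j = \<zero>"
      and eq: "vadd R h (vsmult R a w) = vadd R h' (vsmult R a' w)"
    have hV: "h \<in> Vs R n" "h' \<in> Vs R n" using as UV by auto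
    have pe: "h k \<oplus> a \<otimes> w k = h' k \<oplus> a' \<otimes> w k" for k
      using fun_cong[OF eq, of k] by (simp add: vadd_def vsmult_def)
    have aa: "a = a'" using pe[of j] as wj by simp
    moreover have "h = h'"
    proof (rule ext)
      fix k
      have "h k \<oplus> a \<otimes> w k = h' k \<oplus> a \<otimes> w k" using pe[of k] aa by simp
      then show "h k = h' k" using as Vs_carrier[OF wV] Vs_carrier hV by simp
    qed
    ultimately show "a = a' \<and> h = h'" by simp
  qed
  have "card U = card (carrier R \<times> ?H)" using card_image[OF inj] im by simp
  also have "\<dots> = card (carrier R) * card ?H" by (simp add: card_cartesian_product)
  finally have "card (carrier R) ^ vdim R U = card (carrier R) * card (carrier R) ^ (vdim R ?H)"
    using dim_card[OF f U] dim_card[OF f HS] by simp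
  then have E: "card (carrier R) ^ vdim R U = card (carrier R) ^ Suc (vdim R ?H)"
    by (simp only: power_Suc)
  have q1: "1 < card (carrier R)" using card_carrier_ge2[OF f] by simp
  have "vdim R U = Suc (vdim R ?H)" using E power_inject_exp[OF q1] by blast
  with HS show ?thesis by simp
qed

lemma exists_unit_vec:
  assumes f: "finite (carrier R)" and U: "subspace_of R n U" and d: "0 < vdim R U"
  shows "\<exists>w j. w \<in> U \<and> w j = \<one>"
proof -
  have UV: "U \<subseteq> Vs R n" and z: "vzero R \<in> U" using U unfolding subspace_of_def by auto
  have "card (carrier R) ^ 1 \<le> card (carrier R) ^ vdim R U"
    by (rule power_increasing) (use d card_carrier_ge2[OF f] in auto)
  then have "2 \<le> card (carrier R) ^ vdim R U" using card_carrier_ge2[OF f] by simp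
  then have "2 \<le> card U" using dim_card[OF f U] by simp
  moreover have "card U \<le> 1" if "U \<subseteq> {vzero R}"
    using card_mono[of "{vzero R}" U] that by simp
  ultimately have "\<not> U \<subseteq> {vzero R}" by linarith
  then obtain u where u: "u \<in> U" "u \<noteq> vzero R" by auto
  then obtain j where uj: "u j \<noteq> \<zero>" unfolding vzero_def by auto
  have ujc: "u j \<in> carrier R" using u UV Vs_carrier by auto
  then have iu: "inv (u j) \<in> carrier R" "inv (u j) \<otimes> u j = \<one>" using uj field_Units by auto
  have "vsmult R (inv (u j)) u \<in> U" using U u iu unfolding subspace_of_def by auto
  moreover have "vsmult R (inv (u j)) u j = \<one>" using iu by (simp add: vsmult_def)
  ultimately show ?thesis by blast
qed

lemma Vs_subspace: "subspace_of R n (Vs R n)"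
  unfolding subspace_of_def by auto

end


lemma Psp_finite:
  assumes "\<forall>i<l. field (K i) \<and> finite (carrier (K i))"
  shows "finite (Psp l K n)"
proof -
  let ?B = "Pow (\<Union>i<l. Vs (K i) (n i))"
  have fB: "finite ?B" using assms field.finite_Vs by blast
  have "Psp l K n \<subseteq> {L. \<forall>x. (x \<in> {..<l} \<longrightarrow> L x \<in> ?B) \<and> (x \<notin> {..<l} \<longrightarrow> L x = {})}"
  proof (rule subsetI, rule CollectI, intro allI conjI impI)
    fix L x assume L: "L \<in> Psp l K n"
    {
      assume x: "x \<in> {..<l}"
      then have "L x \<subseteq> Vs (K x) (n x)" using L unfolding Psp_def subspace_of_def by auto
      then show "L x \<in> ?B" using x by auto
    }
    {
      assume "x \<notin> {..<l}"
      then show "L x = {}" using L unfolding Psp_def by auto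
    }
  qed
  then show ?thesis using finite_set_of_finite_funs[OF _ fB, of "{..<l}" "{}"] finite_subset by blast
qed

lemma Ltop_Psp:
  assumes "\<forall>i<l. field (K i)"
  shows "Ltop l K n \<in> Psp l K n"
  unfolding Psp_def Ltop_def using assms field.Vs_subspace by auto

lemma key_step:
  assumes fK: "\<forall>i<l. field (K i) \<and> finite (carrier (K i))"
    and L: "L \<in> Psp l K n" and pos: "0 < Rk l K L"
  shows "\<exists>L'\<in>Psp l K n. Lsubseteq l L' L \<and> Suc (Rk l K L') = Rk l K L"
proof -
  have "\<exists>i<l. 0 < vdim (K i) (L i)"
  proof (rule ccontr)
    assume "\<not> (\<exists>i<l. 0 < vdim (K i) (L i))"
    then have "\<forall>i\<in>{..<l}. vdim (K i) (L i) = 0" by auto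
    then have "Rk l K L = 0" unfolding Rk_def by simp
    then show False using pos by simp
  qed
  then obtain i where i: "i < l" "0 < vdim (K i) (L i)" by blast
  have fi: "field (K i)" "finite (carrier (K i))" using fK i by auto
  have U: "subspace_of (K i) (n i) (L i)" using L i unfolding Psp_def by auto
  obtain w j where w: "w \<in> L i" "w j = \<one>\<^bsub>K i\<^esub>"
    using field.exists_unit_vec[OF fi(1) fi(2) U i(2)] by blast
  let ?H = "{u \<in> L i. u j = \<zero>\<^bsub>K i\<^esub>}"
  have hp: "subspace_of (K i) (n i) ?H" "vdim (K i) (L i) = Suc (vdim (K i) ?H)"
    using field.hyperplane[OF fi(1) fi(2) U w] by auto
  let ?L' = "L(i := ?H)"
  have "?L' \<in> Psp l K n" using L hp(1) i unfolding Psp_def by auto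
  moreover have "Lsubseteq l ?L' L" unfolding Lsubseteq_def by auto
  moreover have "Suc (Rk l K ?L') = Rk l K L"
  proof -
    have "Rk l K ?L' = vdim (K i) ?H + (\<Sum>k\<in>{..<l} - {i}. vdim (K k) (?L' k))"
      unfolding Rk_def using i by (subst sum.remove[of _ i]) auto
    also have "(\<Sum>k\<in>{..<l} - {i}. vdim (K k) (?L' k)) = (\<Sum>k\<in>{..<l} - {i}. vdim (K k) (L k))"
      by (rule sum.cong) auto
    finally have a: "Rk l K ?L' = vdim (K i) ?H + (\<Sum>k\<in>{..<l} - {i}. vdim (K k) (L k))" .
    have b: "Rk l K L = vdim (K i) (L i) + (\<Sum>k\<in>{..<l} - {i}. vdim (K k) (L k))"
      unfolding Rk_def using i by (subst sum.remove[of _ i]) auto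
    show ?thesis using a b hp(2) by simp
  qed
  ultimately show ?thesis by blast
qed

theorem mainTheorem7:
  fixes l :: nat and K :: "nat \<Rightarrow> ('a, 'b) ring_scheme" and n :: "nat \<Rightarrow> nat"
    and rho :: "(nat \<Rightarrow> (nat \<Rightarrow> 'a) set) \<Rightarrow> nat"
  assumes "sum_matroid l K n rho"
    and "1 \<le> i" and "i \<le> nullity l K rho (Ltop l K n)"
  shows "Min {Rk l K L | L. L \<in> Psp l K n \<and> nullity l K rho L = i}
       = Min {Rk l K L | L. L \<in> Psp l K n \<and> nullity l K rho L \<ge> i}"
proof -
  have fK: "\<forall>i<l. field (K i) \<and> finite (carrier (K i))"
    and R1: "\<forall>L\<in>Psp l K n. rho L \<le> Rk l K L"
    and R2: "\<forall>L\<in>Psp l K n. \<forall>L'\<in>Psp l K n. Lsubseteq l L L' \<longrightarrow> rho L \<le> rho L'"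
    using assms(1) unfolding sum_matroid_def by auto
  define A where "A = {Rk l K L | L. L \<in> Psp l K n \<and> nullity l K rho L = i}"
  define B where "B = {Rk l K L | L. L \<in> Psp l K n \<and> nullity l K rho L \<ge> i}"
  have finP: "finite (Psp l K n)" by (rule Psp_finite[OF fK])
  have AB: "A \<subseteq> B" unfolding A_def B_def by auto
  have "B \<subseteq> Rk l K ` Psp l K n" unfolding B_def by auto
  then have finB: "finite B" using finP finite_subset by blast
  then have finA: "finite A" using AB finite_subset by blast
  have top: "Ltop l K n \<in> Psp l K n" using Ltop_Psp fK by blast
  then have "Rk l K (Ltop l K n) \<in> B" unfolding B_def using assms(3) by auto
  then have neB: "B \<noteq> {}" by blast
  have "Min B \<in> B" using Min_in[OF finB neB] .
  then obtain L0 where L0: "L0 \<in> Psp l K n" "nullity l K rho L0 \<ge> i" "Rk l K L0 = Min B"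
    unfolding B_def by auto
  have nl: "nullity l K rho L0 = i"
  proof (rule ccontr)
    assume "nullity l K rho L0 \<noteq> i"
    then have gt: "nullity l K rho L0 > i" using L0 by simp
    then have "0 < Rk l K L0" using assms(2) unfolding nullity_def by simp
    then obtain L' where L': "L' \<in> Psp l K n" "Lsubseteq l L' L0" "Suc (Rk l K L') = Rk l K L0"
      using key_step[OF fK L0(1)] by blast
    have "rho L' \<le> rho L0" using R2 L' L0 by blast
    then have "nullity l K rho L' \<ge> i" using gt L' unfolding nullity_def by simp
    then have "Rk l K L' \<in> B" unfolding B_def using L' by auto
    then have "Min B \<le> Rk l K L'" using Min_le[OF finB] by blast
    then show False using L' L0 by simp
  qed
  have "Min B \<in> A" unfolding A_def using L0 nl by (intro CollectI exI[of _ L0]) simp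
  then have neA: "A \<noteq> {}" by blast
  have "Min A \<le> Min B" using Min_le[OF finA \<open>Min B \<in> A\<close>] .
  moreover have "Min B \<le> Min A" using Min_le[OF finB] Min_in[OF finA neA] AB by blast
  ultimately show ?thesis unfolding A_def B_def by simp
qed

end
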